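(* Let $p$ be a prime and let $(\alpha,\delta)\in\mathbb{O}_p\times(\mathbb{Q}_{\ge0}\cup\{\infty\})$ be an admissible pair. Then $$\mathbb{Z}_{(p)}[X]\cap M_{(p),\alpha,\delta}=\begin{cases}p\,\mathbb{Z}_{(p)}[X], & \delta=0,\\ (p,g_\alpha(X)), & \delta>0,\end{cases}$$ where $g_\alpha\in\mathbb{Z}_{(p)}[X]$ is a monic polynomial whose reduction modulo $p$ is the minimal polynomial over $\mathbb{F}_p$ of the residue $\overline{\alpha}$ of $\alpha$ modulo $\mathbb{M}_p$.
   Context: Fix a prime $p$. $\overline{\mathbb{Q}_p}$ is an algebraic closure of $\mathbb{Q}_p$, $v_p$ the unique extension of the $p$-adic valuation, $\mathbb{C}_p$ the completion of $\overline{\mathbb{Q}_p}$, $\mathbb{O}_p=\{x\in\mathbb{C}_p:v_p(x)\ge0\}$ with maximal ideal $\mathbb{M}_p$ (its residue field is an algebraic closure of $\mathbb{F}_p=\mathbb{Z}/p\mathbb{Z}$). A pair $(\alpha,\delta)\in\mathbb{C}_p\times(\mathbb{Q}\cup\{\infty\})$ is admissible if: when $\delta\in\mathbb{Q}$, $\alpha\in\overline{\mathbb{Q}_p}$; when $\delta=\infty$, $\alpha$ is transcendental over $\mathbb{Q}$. For $\delta\in\mathbb{Q}$, $v_{p,\alpha,\delta}$ is the monomial valuation on $\mathbb{C}_p(X)$ given on polynomials by $v_{p,\alpha,\delta}(\sum_i a_i(X-\alpha)^i)=\min_i\{v_p(a_i)+i\delta\}$; for $\delta=\infty$, $v_{p,\alpha,\infty}(\varphi)=v_p(\varphi(\alpha))$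 for $\varphi\in\mathbb{Q}(X)$. $\mathbb{Z}_{(p),\alpha,\delta}=\{\varphi\in\mathbb{Q}(X):v_{p,\alpha,\delta}(\varphi)\ge0\}$ and $M_{(p),\alpha,\delta}=\{\varphi\in\mathbb{Q}(X):v_{p,\alpha,\delta}(\varphi)>0\}$ is its maximal ideal. *)

theory Defs
  imports "HOL-Computational_Algebra.Computational_Algebra" "HOL-Library.Extended_Real"
begin

definition padic_val_rat :: "nat \<Rightarrow> rat \<Rightarrow> int" where
  "padic_val_rat p q =
     int (multiplicity (int p) (fst (quotient_of q))) - int (multiplicity (int p) (snd (quotient_of q)))"

definition in_Zp :: "nat \<Rightarrow> rat \<Rightarrow> bool" where
  "in_Zp p q \<longleftrightarrow> \<not> (int p dvd snd (quotient_of q))"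

definition Zp_poly :: "nat \<Rightarrow> rat poly \<Rightarrow> bool" where
  "Zp_poly p f \<longleftrightarrow> (\<forall>i. in_Zp p (coeff f i))"

definition in_pZp :: "nat \<Rightarrow> rat \<Rightarrow> bool" where
  "in_pZp p q \<longleftrightarrow> in_Zp p (q / of_nat p)"

(* These properties characterise
   C_p up to isomorphism of valued fields. *)
definition is_Cp :: "nat \<Rightarrow> ('a::field_char_0 \<Rightarrow> ereal) \<Rightarrow> bool" where
  "is_Cp p v \<longleftrightarrow>
     (\<forall>x. v x = \<infinity> \<longleftrightarrow> x = 0) \<and>
     (\<forall>x. v x \<noteq> -\<infinity>) \<and>
     (\<forall>x y. v (x * y) = v x + v y) \<and>
     (\<forall>x y. min (v x) (v y) \<le> v (x + y)) \<and>
     (\<forall>q. q \<noteq> 0 \<longrightarrow> v (of_rat q) = ereal (of_int (padic_val_rat p q))) \<and>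
     (\<forall>f :: 'a poly. degree f > 0 \<longrightarrow> (\<exists>x. poly f x = 0)) \<and>
     (\<forall>s :: nat \<Rightarrow> 'a. (\<forall>N::real. \<exists>M. \<forall>m\<ge>M. \<forall>n\<ge>M. ereal N \<le> v (s m - s n)) \<longrightarrow>
          (\<exists>x. \<forall>N::real. \<exists>M. \<forall>n\<ge>M. ereal N \<le> v (s n - x))) \<and>
     (\<forall>x. \<forall>N::real. \<exists>y. algebraic y \<and> ereal N \<le> v (x - y))"

(* x \<in> Q_p, i.e. x lies in the closure of Q in K *)
definition in_Qp :: "('a::field_char_0 \<Rightarrow> ereal) \<Rightarrow> 'a \<Rightarrow> bool" where
  "in_Qp v x \<longleftrightarrow> (\<forall>N::real. \<exists>q::rat. ereal N \<le> v (x - of_rat q))"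

definition in_Qpbar :: "('a::field_char_0 \<Rightarrow> ereal) \<Rightarrow> 'a \<Rightarrow> bool" where
  "in_Qpbar v x \<longleftrightarrow> (\<exists>f :: 'a poly. f \<noteq> 0 \<and> (\<forall>i. in_Qp v (coeff f i)) \<and> poly f x = 0)"

definition admissible :: "('a::field_char_0 \<Rightarrow> ereal) \<Rightarrow> 'a \<Rightarrow> ereal \<Rightarrow> bool" where
  "admissible v \<alpha> \<delta> \<longleftrightarrow>
     (\<exists>q::rat. \<delta> = ereal (of_rat q) \<and> in_Qpbar v \<alpha>) \<or> (\<delta> = \<infinity> \<and> \<not> algebraic \<alpha>)"

(* v_{p,\<alpha>,\<delta>} on Q[X]: min_i (v(a_i) + i \<delta>) where f = \<Sum> a_i (X - \<alpha>)^i,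
   resp. v(f(\<alpha>)) if \<delta> = \<infinity> *)
definition mono_val :: "('a::field_char_0 \<Rightarrow> ereal) \<Rightarrow> 'a \<Rightarrow> ereal \<Rightarrow> rat poly \<Rightarrow> ereal" where
  "mono_val v \<alpha> \<delta> f =
     (if \<delta> = \<infinity> then v (poly (map_poly of_rat f) \<alpha>)
      else Min ((\<lambda>i. v (coeff (pcompose (map_poly of_rat f) [:\<alpha>, 1:]) i) + ereal (real i) * \<delta>)
                ` {..degree f}))"

(* g \<in> Z_(p)[X] monic whose reduction mod p is the minimal polynomial over F_p of
   the residue of \<alpha>: the reduction vanishes at the residue of \<alpha>, and every
   polynomial of smaller degree whose reduction vanishes there reduces to 0. *)
definition lift_of_minpoly :: "nat \<Rightarrow> ('a::field_char_0 \<Rightarrow> ereal) \<Rightarrow> 'a \<Rightarrow> rat poly \<Rightarrow> bool" where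
  "lift_of_minpoly p v \<alpha> g \<longleftrightarrow>
     Zp_poly p g \<and> lead_coeff g = 1 \<and> 0 < v (poly (map_poly of_rat g) \<alpha>) \<and>
     (\<forall>h. Zp_poly p h \<and> degree h < degree g \<and> 0 < v (poly (map_poly of_rat h) \<alpha>)
          \<longrightarrow> (\<forall>i. in_pZp p (coeff h i)))"

end

theory Submission
  imports Defs
begin

locale cpv =
  fixes p :: nat and v :: "'a::field_char_0 \<Rightarrow> ereal"
  assumes prime: "prime p" and Cp: "is_Cp p v"
begin

lemmas CP = Cp[unfolded is_Cp_def]
lemma v0: "v 0 = \<infinity>" using CP[THEN conjunct1] by simp
lemma vmult: "v (x * y) = v x + v y" using CP[THEN conjunct2, THEN conjunct2, THEN conjunct1] by simp
lemma vadd: "min (v x) (v y) \<le> v (x + y)"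
  using CP[THEN conjunct2, THEN conjunct2, THEN conjunct2, THEN conjunct1] by simp
lemma vrat: "q \<noteq> 0 \<Longrightarrow> v (of_rat q) = ereal (of_int (padic_val_rat p q))"
  using CP[THEN conjunct2, THEN conjunct2, THEN conjunct2, THEN conjunct2, THEN conjunct1] by simp

lemma p_pos: "p > 0" using prime prime_gt_0_nat by blast
lemma p_int_prime: "prime (int p)" using prime by simp

lemma padic_nonneg:
  assumes "q \<noteq> 0"
  shows "in_Zp p q \<longleftrightarrow> 0 \<le> padic_val_rat p q"
proof -
  obtain a b where qa: "quotient_of q = (a, b)" by (cases "quotient_of q") auto
  have b0: "b > 0" using quotient_of_denom_pos[OF qa] .
  have cop: "coprime a b" using quotient_of_coprime[OF qa] .
  have a0: "a \<noteq> 0" using quotient_of_div[OF qa] assms by auto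
  have pv: "padic_val_rat p q = int (multiplicity (int p) a) - int (multiplicity (int p) b)"
    unfolding padic_val_rat_def qa by simp
  show ?thesis
  proof (cases "int p dvd b")
    case True
    have "\<not> int p dvd a"
    proof
      assume "int p dvd a"
      then have "is_unit (int p)" using cop True coprime_common_divisor by blast
      then show False using p_int_prime not_prime_unit by blast
    qed
    then have m1: "multiplicity (int p) a = 0" by (rule not_dvd_imp_multiplicity_0)
    have m2: "multiplicity (int p) b > 0" using b0 p_int_prime not_prime_unit True
      by (subst multiplicity_gt_zero_iff) auto
    have z: "\<not> in_Zp p q" unfolding in_Zp_def qa using True by simp
    have "padic_val_rat p q < 0" using pv m1 m2 by linarith
    then show ?thesis using z by linarith
  next
    case False
    then have m: "multiplicity (int p) b = 0" by (rule not_dvd_imp_multiplicity_0)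
    have z: "in_Zp p q" unfolding in_Zp_def qa using False by simp
    have "padic_val_rat p q \<ge> 0" using pv m by linarith
    then show ?thesis using z by linarith
  qed
qed

lemma vZp: "in_Zp p q \<longleftrightarrow> 0 \<le> v (of_rat q)"
proof (cases "q = 0")
  case True
  have "\<not> int p dvd 1" using p_int_prime not_prime_unit by blast
  then show ?thesis using True by (simp add: in_Zp_def v0)
next
  case False
  then show ?thesis using padic_nonneg[OF False] vrat[OF False] by simp
qed

lemma v1: "v 1 = 0"
proof -
  have "padic_val_rat p 1 = 0" by (simp add: padic_val_rat_def)
  then show ?thesis using vrat[of 1] by simp
qed

lemma vm1: "v (-1) = 0"
proof -
  have "padic_val_rat p (-1) = 0" by (simp add: padic_val_rat_def)
  then show ?thesis using vrat[of "-1"] by simp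
qed

lemma vneg: "v (- x) = v x"
proof -
  have "v ((-1) * x) = v x" using vmult[of "-1" x] vm1 by simp
  then show ?thesis by simp
qed

lemma vdiff: "min (v x) (v y) \<le> v (x - y)"
  using vadd[of x "-y"] by (simp add: vneg)

lemma vp: "v (of_nat p) = 1"
proof -
  have e: "(of_nat p :: rat) = of_int (int p)" by simp
  have q: "quotient_of (of_nat p) = (int p, 1)" by (subst e, rule quotient_of_rat_of_int)
  have m: "multiplicity (int p) (int p) = 1"
    using p_int_prime not_prime_unit p_pos by (intro multiplicity_self) auto
  have "v (of_rat (of_nat p)) = 1" using p_pos
    by (subst vrat) (simp_all add: padic_val_rat_def q m)
  then show ?thesis by simp
qed

lemma vpZp: "in_pZp p q \<longleftrightarrow> 0 < v (of_rat q)"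
proof (cases "q = 0")
  case True
  then show ?thesis using vZp[of 0] by (simp add: in_pZp_def v0)
next
  case False
  have qq: "q = (q / of_nat p) * of_nat p" using p_pos by simp
  have ne: "q / of_nat p \<noteq> 0" using False p_pos by simp
  have vq: "v (of_rat q) = v (of_rat (q / of_nat p)) + 1"
  proof -
    have "v (of_rat q) = v (of_rat (q / of_nat p) * of_rat (of_nat p))"
      by (metis qq of_rat_mult)
    also have "\<dots> = v (of_rat (q / of_nat p)) + 1" by (simp only: vmult of_rat_of_nat_eq vp)
    finally show ?thesis .
  qed
  obtain k where vk: "v (of_rat (q / of_nat p)) = ereal (of_int k)" using vrat[OF ne] by blast
  have "in_pZp p q \<longleftrightarrow> 0 \<le> v (of_rat (q / of_nat p))" unfolding in_pZp_def vZp ..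
  also have "\<dots> \<longleftrightarrow> 0 \<le> k" unfolding vk by simp
  also have "\<dots> \<longleftrightarrow> 0 < real_of_int (k + 1)" by (simp only: of_int_0_less_iff) arith
  also have "\<dots> \<longleftrightarrow> 0 < ereal (of_int k) + 1" by simp
  also have "\<dots> \<longleftrightarrow> 0 < v (of_rat q)" by (simp only: vq vk)
  finally show ?thesis .
qed

definition ok :: "ereal \<Rightarrow> 'a poly \<Rightarrow> bool" where
  "ok c P \<longleftrightarrow> (\<forall>i. c \<le> v (coeff P i))"

lemma ok_0: "ok c 0" unfolding ok_def by (simp add: v0)

lemma ok_add: "ok c P \<Longrightarrow> ok c Q \<Longrightarrow> ok c (P + Q)"
  unfolding ok_def by (metis coeff_add min.bounded_iff order_trans vadd)

lemma ok_diff: "ok c P \<Longrightarrow> ok c Q \<Longrightarrow> ok c (P - Q)"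
  unfolding ok_def by (metis coeff_diff min.bounded_iff order_trans vdiff)

lemma v_mult_ge: "c \<le> v x \<Longrightarrow> 0 \<le> v y \<Longrightarrow> c \<le> v (x * y)"
  unfolding vmult using add_mono[of c "v x" 0 "v y"] by simp

lemma ok_pCons: "c \<le> v a \<Longrightarrow> ok c P \<Longrightarrow> ok c (pCons a P)"
  unfolding ok_def by (simp add: coeff_pCons split: nat.split)

lemma ok_const: "c \<le> v a \<Longrightarrow> ok c [:a:]"
  using ok_pCons ok_0 by blast

lemma ok_smult: "c \<le> v a \<Longrightarrow> ok 0 Q \<Longrightarrow> ok c (smult a Q)"
  unfolding ok_def by (simp add: v_mult_ge)

lemma ok_pCons0: "ok c P \<Longrightarrow> ok c (pCons 0 P)"
proof -
  assume "ok c P"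
  moreover have "c \<le> v 0" by (simp add: v0)
  ultimately show ?thesis using ok_pCons by blast
qed

lemma ok_mult: "ok c P \<Longrightarrow> ok 0 Q \<Longrightarrow> ok c (P * Q)"
proof (induction P)
  case 0
  then show ?case by (simp add: ok_0)
next
  case (pCons a P)
  have "c \<le> v a" using pCons.prems(1) unfolding ok_def by (metis coeff_pCons_0)
  moreover have "ok c P" using pCons.prems(1) unfolding ok_def by (metis coeff_pCons_Suc)
  ultimately show ?case using pCons by (simp add: ok_add ok_smult ok_pCons0)
qed

lemma ok_mult': "ok 0 Q \<Longrightarrow> ok c P \<Longrightarrow> ok c (Q * P)"
  using ok_mult by (metis mult.commute)

lemma ok_pcompose: "ok c P \<Longrightarrow> ok 0 q \<Longrightarrow> ok c (pcompose P q)"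
proof (induction P)
  case 0
  then show ?case by (simp add: ok_0)
next
  case (pCons a P)
  have "c \<le> v a" using pCons.prems(1) unfolding ok_def by (metis coeff_pCons_0)
  moreover have "ok c P" using pCons.prems(1) unfolding ok_def by (metis coeff_pCons_Suc)
  ultimately show ?case using pCons by (simp add: pcompose_pCons ok_add ok_const ok_mult')
qed

lemma ok_poly: "ok c P \<Longrightarrow> 0 \<le> v x \<Longrightarrow> c \<le> v (poly P x)"
proof -
  assume a: "ok c P" "0 \<le> v x"
  have "ok c (pcompose P [:x:])" using a by (intro ok_pcompose ok_const)
  then show ?thesis unfolding ok_def pcompose_pCons_0 by (metis coeff_pCons_0)
qed

lemma ok_mono: "c \<le> d \<Longrightarrow> ok d P \<Longrightarrow> ok c P"
  unfolding ok_def using order_trans by blast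

lemma Zp_ok: "Zp_poly p f \<longleftrightarrow> ok 0 (map_poly of_rat f)"
  unfolding Zp_poly_def ok_def by (simp add: coeff_map_poly vZp)

lemma pZp_ok: "(\<forall>i. in_pZp p (coeff f i)) \<longleftrightarrow> (\<forall>i. 0 < v (coeff (map_poly of_rat f) i))"
  by (simp add: coeff_map_poly vpZp)

lemma mp_add: "map_poly (of_rat :: rat \<Rightarrow> 'a) (f + g) = map_poly of_rat f + map_poly of_rat g"
  by (simp add: poly_eq_iff coeff_map_poly of_rat_add)
lemma mp_diff: "map_poly (of_rat :: rat \<Rightarrow> 'a) (f - g) = map_poly of_rat f - map_poly of_rat g"
  by (simp add: poly_eq_iff coeff_map_poly of_rat_diff)
lemma mp_mult: "map_poly (of_rat :: rat \<Rightarrow> 'a) (f * g) = map_poly of_rat f * map_poly of_rat g"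
  by (simp add: poly_eq_iff coeff_map_poly coeff_mult of_rat_sum of_rat_mult)
lemma mp_smult: "map_poly (of_rat :: rat \<Rightarrow> 'a) (smult c f) = smult (of_rat c) (map_poly of_rat f)"
  by (simp add: poly_eq_iff coeff_map_poly of_rat_mult)
lemma mp_deg: "degree (map_poly (of_rat :: rat \<Rightarrow> 'a) f) = degree f"
  by (simp add: degree_map_poly)

lemma Zp_add: "Zp_poly p f \<Longrightarrow> Zp_poly p g \<Longrightarrow> Zp_poly p (f + g)"
  unfolding Zp_ok mp_add by (rule ok_add)
lemma Zp_diff: "Zp_poly p f \<Longrightarrow> Zp_poly p g \<Longrightarrow> Zp_poly p (f - g)"
  unfolding Zp_ok mp_diff by (rule ok_diff)
lemma Zp_mult: "Zp_poly p f \<Longrightarrow> Zp_poly p g \<Longrightarrow> Zp_poly p (f * g)"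
  unfolding Zp_ok mp_mult by (rule ok_mult)
lemma Zp_monom: "in_Zp p c \<Longrightarrow> Zp_poly p (monom c k)"
  unfolding Zp_poly_def using vZp[of 0] by (simp add: coeff_monom v0)

lemma ok_smult_p: "Zp_poly p h \<Longrightarrow> ok 1 (map_poly (of_rat :: rat \<Rightarrow> 'a) (smult (of_nat p) h))"
  unfolding Zp_ok mp_smult of_rat_of_nat_eq by (rule ok_smult) (simp_all add: vp)

lemma Zp_smult_p: "Zp_poly p h \<Longrightarrow> Zp_poly p (smult (of_nat p) h)"
  unfolding Zp_ok using ok_smult_p ok_mono[of 0 1] by (simp add: Zp_ok)

lemma pZp_split:
  assumes "\<forall>i. in_pZp p (coeff f i)"
  shows "\<exists>h. Zp_poly p h \<and> f = smult (of_nat p) h"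
proof (intro exI conjI)
  show "Zp_poly p (smult (1 / of_nat p) f)"
    using assms unfolding Zp_poly_def in_pZp_def by simp
  show "f = smult (of_nat p) (smult (1 / of_nat p) f)" using p_pos by simp
qed

lemma ok_lin: "0 \<le> v b \<Longrightarrow> ok 0 [:b, 1:]"
  by (intro ok_pCons ok_const) (simp_all add: v1)


lemma Zp_zero: "Zp_poly p 0" by (simp add: Zp_ok ok_0)

lemma Zp_divide:
  assumes g: "Zp_poly p g" "lead_coeff g = 1" "degree g > 0"
  shows "Zp_poly p f \<Longrightarrow> \<exists>q r. Zp_poly p q \<and> Zp_poly p r \<and> degree r < degree g \<and> f = g * q + r"
proof (induction "degree f" arbitrary: f rule: less_induct)
  case less
  show ?case
  proof (cases "degree f < degree g")
    case True
    then show ?thesis using less.prems Zp_zero by (intro exI[of _ 0] exI[of _ f]) simp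
  next
    case False
    define n where "n = degree f"
    define d where "d = degree g"
    define c where "c = lead_coeff f"
    define f' where "f' = f - monom c (n - d) * g"
    have dn: "d \<le> n" "0 < d" using False g(3) unfolding n_def d_def by auto
    have cZ: "in_Zp p c" using less.prems unfolding Zp_poly_def c_def by blast
    have Zf': "Zp_poly p f'" unfolding f'_def
      by (intro Zp_diff Zp_mult Zp_monom less.prems cZ g(1))
    have "coeff (monom c (n - d) * g) n = c * coeff g d"
      using dn by (simp add: coeff_monom_mult)
    then have cf': "coeff f' n = 0" using g(2) unfolding f'_def c_def n_def d_def by simp
    have "degree (monom c (n - d) * g) \<le> n"
      using degree_mult_le[of "monom c (n - d)" g] degree_monom_le[of c "n - d"] dn
      unfolding d_def by linarith
    then have df': "degree f' \<le> n" unfolding f'_def n_def by (intro degree_diff_le) auto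
    have "degree f' < n"
    proof (rule ccontr)
      assume "\<not> degree f' < n"
      then have "degree f' = n" using df' by simp
      then have "f' = 0" using cf' by (metis leading_coeff_0_iff)
      then show False using \<open>degree f' = n\<close> dn by simp
    qed
    then obtain q r where qr: "Zp_poly p q" "Zp_poly p r" "degree r < degree g" "f' = g * q + r"
      using less.hyps[OF _ Zf'] unfolding n_def by blast
    have "f = g * (q + monom c (n - d)) + r"
      using qr(4) unfolding f'_def by (simp add: algebra_simps)
    moreover have "Zp_poly p (q + monom c (n - d))" by (intro Zp_add qr(1) Zp_monom cZ)
    ultimately show ?thesis using qr(2,3) by blast
  qed
qed

lemma ereal0_mult[simp]: "ereal 0 * (x::ereal) = 0"
  by (simp add: zero_ereal_def[symmetric])

lemma ereal_one_pos: "1 \<le> (x::ereal) \<Longrightarrow> 0 < x"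
  using less_le_trans[of 0 1 x] by simp

lemma ereal_pos_add: "0 \<le> (a::ereal) \<Longrightarrow> 0 < b \<Longrightarrow> 0 < a + b"
  by (metis add_mono add.left_neutral order_less_le_trans order_refl)

lemma mv_pos_iff:
  assumes a: "0 \<le> v \<alpha>" and d: "0 < \<delta>" and f: "Zp_poly p f"
  shows "0 < mono_val v \<alpha> \<delta> f \<longleftrightarrow> 0 < v (poly (map_poly of_rat f) \<alpha>)"
proof (cases "\<delta> = \<infinity>")
  case True
  then show ?thesis by (simp add: mono_val_def)
next
  case False
  define B where "B = pcompose (map_poly of_rat f) [:\<alpha>, 1:]"
  have okB: "ok 0 B" unfolding B_def using f a by (intro ok_pcompose ok_lin) (simp_all add: Zp_ok)
  have mv: "mono_val v \<alpha> \<delta> f = Min ((\<lambda>i. v (coeff B i) + ereal (real i) * \<delta>) ` {..degree f})"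
    using False unfolding B_def by (simp add: mono_val_def)
  have "0 < Min ((\<lambda>i. v (coeff B i) + ereal (real i) * \<delta>) ` {..degree f})
        \<longleftrightarrow> (\<forall>i\<in>{..degree f}. 0 < v (coeff B i) + ereal (real i) * \<delta>)"
    by (subst Min_gr_iff) auto
  also have "\<dots> \<longleftrightarrow> 0 < v (coeff B 0)"
  proof
    assume "\<forall>i\<in>{..degree f}. 0 < v (coeff B i) + ereal (real i) * \<delta>"
    then show "0 < v (coeff B 0)" by (drule_tac x=0 in bspec) auto
  next
    assume h: "0 < v (coeff B 0)"
    show "\<forall>i\<in>{..degree f}. 0 < v (coeff B i) + ereal (real i) * \<delta>"
    proof
      fix i assume "i \<in> {..degree f}"
      show "0 < v (coeff B i) + ereal (real i) * \<delta>"
      proof (cases "i = 0")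
        case True
        then show ?thesis using h by simp
      next
        case False
        have "0 < ereal (real i) * \<delta>" using False d
          by (metis of_nat_0_less_iff ereal_less(2) ereal_zero_less_0_iff gr0I)
        moreover have "0 \<le> v (coeff B i)" using okB unfolding ok_def by blast
        ultimately show ?thesis by (rule ereal_pos_add[rotated])
      qed
    qed
  qed
  also have "coeff B 0 = poly (map_poly of_rat f) \<alpha>"
    unfolding B_def by (simp add: poly_0_coeff_0[symmetric] poly_pcompose)
  finally show ?thesis using mv by simp
qed


lemma pcomp_lin_inv: "pcompose [:\<alpha>, 1:] [:- \<alpha>, (1::'a):] = [:0, 1:]"
  by (simp add: pcompose_pCons)

lemma case_zero:
  assumes a: "0 \<le> v \<alpha>"
  shows "{f. Zp_poly p f \<and> 0 < mono_val v \<alpha> 0 f} = {smult (of_nat p) h | h. Zp_poly p h}"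
proof -
  define B where "B f = pcompose (map_poly of_rat f) [:\<alpha>, 1:]" for f
  have mv: "mono_val v \<alpha> 0 f = Min ((\<lambda>i. v (coeff (B f) i)) ` {..degree f})" for f
    unfolding B_def by (simp add: mono_val_def)
  have degB: "degree (B f) = degree f" for f unfolding B_def by (simp add: degree_pcompose mp_deg)
  have bk: "pcompose (B f) [:- \<alpha>, 1:] = map_poly of_rat f" for f
    unfolding B_def by (simp add: pcompose_assoc[symmetric] pcomp_lin_inv)
  show ?thesis
  proof (intro set_eqI iffI)
    fix f assume "f \<in> {f. Zp_poly p f \<and> 0 < mono_val v \<alpha> 0 f}"
    then have Zf: "Zp_poly p f" and pos: "0 < Min ((\<lambda>i. v (coeff (B f) i)) ` {..degree f})"
      by (auto simp: mv)
    define m where "m = Min ((\<lambda>i. v (coeff (B f) i)) ` {..degree f})"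
    have "ok m (B f)" unfolding ok_def
    proof
      fix i show "m \<le> v (coeff (B f) i)"
      proof (cases "i \<le> degree f")
        case True then show ?thesis unfolding m_def by (intro Min_le) auto
      next
        case False then have "coeff (B f) i = 0" using degB by (simp add: coeff_eq_0)
        then show ?thesis by (simp add: v0)
      qed
    qed
    then have "ok m (pcompose (B f) [:- \<alpha>, 1:])" using a by (intro ok_pcompose ok_lin) (simp_all add: vneg)
    then have "ok m (map_poly of_rat f)" by (simp add: bk)
    then have "\<forall>i. m \<le> v (coeff (map_poly of_rat f) i)" unfolding ok_def by blast
    then have "\<forall>i. 0 < v (coeff (map_poly of_rat f) i)" using pos unfolding m_def[symmetric]
      using less_le_trans by blast
    then have "\<forall>i. in_pZp p (coeff f i)" unfolding pZp_ok .
    then obtain h where "Zp_poly p h" "f = smult (of_nat p) h" using pZp_split by blast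
    then show "f \<in> {smult (of_nat p) h | h. Zp_poly p h}" by blast
  next
    fix f assume "f \<in> {smult (of_nat p) h | h. Zp_poly p h}"
    then obtain h where h: "Zp_poly p h" "f = smult (of_nat p) h" by blast
    have Zf: "Zp_poly p f" using h Zp_smult_p by simp
    have "ok 1 (B f)" unfolding B_def using h a ok_smult_p by (intro ok_pcompose ok_lin) simp_all
    then have "\<forall>i. 0 < v (coeff (B f) i)" unfolding ok_def
      using ereal_one_pos by blast
    then have "0 < mono_val v \<alpha> 0 f" unfolding mv by (subst Min_gr_iff) auto
    then show "f \<in> {f. Zp_poly p f \<and> 0 < mono_val v \<alpha> 0 f}" using Zf by blast
  qed
qed

lemma case_pos:
  assumes a: "0 \<le> v \<alpha>" and d: "0 < \<delta>" and g: "lift_of_minpoly p v \<alpha> g"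
  shows "{f. Zp_poly p f \<and> 0 < mono_val v \<alpha> \<delta> f} =
           {smult (of_nat p) a + g * b | a b. Zp_poly p a \<and> Zp_poly p b}"
proof -
  have gZ: "Zp_poly p g" and gl: "lead_coeff g = 1" and gv: "0 < v (poly (map_poly of_rat g) \<alpha>)"
    and gmin: "\<And>h. Zp_poly p h \<Longrightarrow> degree h < degree g \<Longrightarrow> 0 < v (poly (map_poly of_rat h) \<alpha>)
          \<Longrightarrow> (\<forall>i. in_pZp p (coeff h i))"
    using g unfolding lift_of_minpoly_def by blast+
  have gd: "degree g > 0"
  proof (rule ccontr)
    assume "\<not> degree g > 0"
    then have "degree g = 0" by simp
    then obtain c where "g = [:c:]" by (rule degree_eq_zeroE)
    then have "g = 1" using gl by (simp add: one_pCons)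
    then show False using gv by (simp add: v1)
  qed
  have vZ: "0 \<le> v (poly (map_poly of_rat h) \<alpha>)" if "Zp_poly p h" for h
    using ok_poly[of 0 "map_poly of_rat h" \<alpha>] that a by (simp add: Zp_ok)
  show ?thesis
  proof (intro set_eqI iffI)
    fix f assume "f \<in> {f. Zp_poly p f \<and> 0 < mono_val v \<alpha> \<delta> f}"
    then have Zf: "Zp_poly p f" and pos: "0 < v (poly (map_poly of_rat f) \<alpha>)"
      using mv_pos_iff[OF a d] by auto
    obtain q r where qr: "Zp_poly p q" "Zp_poly p r" "degree r < degree g" "f = g * q + r"
      using Zp_divide[OF gZ gl gd Zf] by blast
    have "poly (map_poly of_rat r) \<alpha> = poly (map_poly of_rat f) \<alpha> - poly (map_poly of_rat g) \<alpha> * poly (map_poly of_rat q) \<alpha>"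
      using qr(4) by (simp add: mp_add mp_mult)
    moreover have "0 < v (poly (map_poly of_rat g) \<alpha> * poly (map_poly of_rat q) \<alpha>)"
      unfolding vmult using gv vZ[OF qr(1)] by (metis add.commute ereal_pos_add)
    ultimately have "0 < v (poly (map_poly of_rat r) \<alpha>)" using pos vdiff
      by (metis min_less_iff_conj order_less_le_trans)
    then have "\<forall>i. in_pZp p (coeff r i)" using gmin qr(2,3) by blast
    then obtain a where "Zp_poly p a" "r = smult (of_nat p) a" using pZp_split by blast
    then show "f \<in> {smult (of_nat p) a + g * b | a b. Zp_poly p a \<and> Zp_poly p b}"
      using qr by (intro CollectI exI[of _ a] exI[of _ q]) (simp add: add.commute)
  next
    fix f assume "f \<in> {smult (of_nat p) a + g * b | a b. Zp_poly p a \<and> Zp_poly p b}"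
    then obtain a b where ab: "Zp_poly p a" "Zp_poly p b" "f = smult (of_nat p) a + g * b" by blast
    have Zf: "Zp_poly p f" using ab gZ by (simp add: Zp_add Zp_mult Zp_smult_p)
    have e: "poly (map_poly of_rat f) \<alpha> = poly (map_poly of_rat (smult (of_nat p) a)) \<alpha> + poly (map_poly of_rat g) \<alpha> * poly (map_poly of_rat b) \<alpha>"
      using ab(3) by (simp only: mp_add mp_mult poly_add poly_mult)
    have "1 \<le> v (poly (map_poly of_rat (smult (of_nat p) a)) \<alpha>)"
      using ok_smult_p[OF ab(1)] a by (rule ok_poly)
    then have p1: "0 < v (poly (map_poly of_rat (smult (of_nat p) a)) \<alpha>)"
      by (rule ereal_one_pos)
    have p2: "0 < v (poly (map_poly of_rat g) \<alpha> * poly (map_poly of_rat b) \<alpha>)"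
      unfolding vmult using gv vZ[OF ab(2)] by (metis add.commute ereal_pos_add)
    have "0 < v (poly (map_poly of_rat f) \<alpha>)" unfolding e using p1 p2 vadd
      by (metis min_less_iff_conj order_less_le_trans)
    then show "f \<in> {f. Zp_poly p f \<and> 0 < mono_val v \<alpha> \<delta> f}" using Zf mv_pos_iff[OF a d Zf] by blast
  qed
qed


end

theorem mainTheorem14:
  fixes p :: nat and v :: "'a::field_char_0 \<Rightarrow> ereal" and \<alpha> :: 'a and \<delta> :: ereal
  assumes "prime p" and "is_Cp p v" and "0 \<le> v \<alpha>" and "0 \<le> \<delta>" and "admissible v \<alpha> \<delta>"
  shows "(\<delta> = 0 \<longrightarrow>
           {f. Zp_poly p f \<and> 0 < mono_val v \<alpha> \<delta> f} = {smult (of_nat p) h | h. Zp_poly p h}) \<and>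
         (0 < \<delta> \<longrightarrow> (\<forall>g. lift_of_minpoly p v \<alpha> g \<longrightarrow>
           {f. Zp_poly p f \<and> 0 < mono_val v \<alpha> \<delta> f} =
           {smult (of_nat p) a + g * b | a b. Zp_poly p a \<and> Zp_poly p b}))"
proof -
  interpret cpv p v using assms(1,2) by unfold_locales
  show ?thesis using case_zero[OF assms(3)] case_pos[OF assms(3)] by blast
qed

end
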